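(* Let $f:\{0,1\}^n\to\{0,1\}$. Each of the following quantities is at most $s_0(f)s_1(f)$, and $s_0(f)s_1(f)\le s(f)^2$: (i) (Khrapchenko bound) $\frac{|C|^2}{|A||B|}$ for any nonempty $A\subseteq f^{-1}(0)$, $B\subseteq f^{-1}(1)$, where $C=\{(x,y)\in A\times B: d_H(x,y)=1\}$; (ii) (Koutsoupias bound) $\|Q\|_2^2$ for any such $A,B,C$, where $Q$ is the $A\times B$ $0/1$ matrix with $Q[x,y]=1$ iff $(x,y)\in C$; (iii) (H\aa stad bound) $\frac{\Pr[\mathcal{C}\mid\Delta]^2}{\Pr[\mathcal{A}\mid\Delta]\Pr[\mathcal{B}\mid\Delta]}\left(\frac{1-p}{2p}\right)^2$ for any $p\in(0,1)$ and any filter $\Delta$ with $\Pr[\mathcal{A}\mid\Delta],\Pr[\mathcal{B}\mid\Delta]>0$.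
   Context: For an input $x$, the sensitivity of $f$ on $x$ is the number of $i\in[n]$ such that flipping $x_i$ changes $f$. $s_0(f)$ (resp. $s_1(f)$) is the maximum sensitivity over $x\in f^{-1}(0)$ (resp. $f^{-1}(1)$), and $s(f)=\max(s_0(f),s_1(f))$. $d_H$ is Hamming distance, $\|\cdot\|_2$ the spectral norm. A restriction is a string $\rho\in\{0,1,\star\}^n$; $f|_\rho$ is the function of the $\star$-variables obtained by fixing the other variables as in $\rho$. $R_p$ is the distribution on restrictions setting each variable independently to $\star$ with probability $p$ and to $0$, $1$ each with probability $(1-p)/2$. A filter $\Delta$ is a set of restrictions such that if $\rho\in\Delta$ then every restriction obtained from $\rho$ by fixing one $\star$ to a constant is in $\Delta$. For an event $E$, $\Pr[E\mid\Delta]=\Pr_{\rho\sim R_p}[E\mid\rho\in\Delta]$. $\mathcal{A}$ is the event that $f|_\rho$ is the constant $0$, $\mathcal{B}$ the event that $f|_\rho$ is the constant $1$, and $\mathcal{C}$ the event that $f|_\rho$ is a single literal ($x_i$ or $\neg x_i$ for some free variable $x_i$). *)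

theory Defs
  imports Complex_Main
begin

text \<open>Inputs in {0,1}^n are represented as functions nat => bool that are False
  outside {0..<n}. A Boolean function is f :: (nat => bool) => bool, only
  evaluated on the cube.\<close>

definition cube :: "nat \<Rightarrow> (nat \<Rightarrow> bool) set" where
  "cube n = {x. \<forall>i\<ge>n. x i = False}"

definition flip :: "(nat \<Rightarrow> bool) \<Rightarrow> nat \<Rightarrow> (nat \<Rightarrow> bool)" where
  "flip x i = x(i := \<not> x i)"

definition sens_at :: "nat \<Rightarrow> ((nat \<Rightarrow> bool) \<Rightarrow> bool) \<Rightarrow> (nat \<Rightarrow> bool) \<Rightarrow> nat" where
  "sens_at n f x = card {i. i < n \<and> f (flip x i) \<noteq> f x}"

text \<open>s_0 and s_1; the maximum over an empty set is taken to be 0.\<close>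
definition s0 :: "nat \<Rightarrow> ((nat \<Rightarrow> bool) \<Rightarrow> bool) \<Rightarrow> nat" where
  "s0 n f = Max (insert 0 (sens_at n f ` {x \<in> cube n. f x = False}))"

definition s1 :: "nat \<Rightarrow> ((nat \<Rightarrow> bool) \<Rightarrow> bool) \<Rightarrow> nat" where
  "s1 n f = Max (insert 0 (sens_at n f ` {x \<in> cube n. f x = True}))"

definition sens :: "nat \<Rightarrow> ((nat \<Rightarrow> bool) \<Rightarrow> bool) \<Rightarrow> nat" where
  "sens n f = max (s0 n f) (s1 n f)"

definition hamming :: "nat \<Rightarrow> (nat \<Rightarrow> bool) \<Rightarrow> (nat \<Rightarrow> bool) \<Rightarrow> nat" where
  "hamming n x y = card {i. i < n \<and> x i \<noteq> y i}"

definition spec_norm :: "'a set \<Rightarrow> 'b set \<Rightarrow> ('a \<Rightarrow> 'b \<Rightarrow> real) \<Rightarrow> real" where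
  "spec_norm A B Q = Sup {sqrt (\<Sum>x\<in>A. (\<Sum>y\<in>B. Q x y * u y)\<^sup>2) | u. (\<Sum>y\<in>B. (u y)\<^sup>2) = 1}"

text \<open>Restrictions: None = star. Variables i >= n carry None but are never free.\<close>
definition restrictions :: "nat \<Rightarrow> (nat \<Rightarrow> bool option) set" where
  "restrictions n = {\<rho>. \<forall>i\<ge>n. \<rho> i = None}"

definition free_vars :: "nat \<Rightarrow> (nat \<Rightarrow> bool option) \<Rightarrow> nat set" where
  "free_vars n \<rho> = {i. i < n \<and> \<rho> i = None}"

definition apply_restr :: "(nat \<Rightarrow> bool option) \<Rightarrow> (nat \<Rightarrow> bool) \<Rightarrow> (nat \<Rightarrow> bool)" where
  "apply_restr \<rho> y = (\<lambda>i. case \<rho> i of Some b \<Rightarrow> b | None \<Rightarrow> y i)"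

definition is_filter :: "nat \<Rightarrow> (nat \<Rightarrow> bool option) set \<Rightarrow> bool" where
  "is_filter n \<Delta> \<longleftrightarrow> \<Delta> \<subseteq> restrictions n \<and>
     (\<forall>\<rho>\<in>\<Delta>. \<forall>i\<in>free_vars n \<rho>. \<forall>b. \<rho>(i := Some b) \<in> \<Delta>)"

definition Rp_weight :: "nat \<Rightarrow> real \<Rightarrow> (nat \<Rightarrow> bool option) \<Rightarrow> real" where
  "Rp_weight n p \<rho> = p ^ card (free_vars n \<rho>) * ((1 - p) / 2) ^ (n - card (free_vars n \<rho>))"

definition cond_prob :: "nat \<Rightarrow> real \<Rightarrow> ((nat \<Rightarrow> bool option) \<Rightarrow> bool)
    \<Rightarrow> (nat \<Rightarrow> bool option) set \<Rightarrow> real" where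
  "cond_prob n p E \<Delta> = (\<Sum>\<rho>\<in>{\<rho>\<in>\<Delta>. E \<rho>}. Rp_weight n p \<rho>) / (\<Sum>\<rho>\<in>\<Delta>. Rp_weight n p \<rho>)"

definition restr_const :: "nat \<Rightarrow> ((nat \<Rightarrow> bool) \<Rightarrow> bool) \<Rightarrow> bool \<Rightarrow> (nat \<Rightarrow> bool option) \<Rightarrow> bool" where
  "restr_const n f c \<rho> \<longleftrightarrow> (\<forall>y\<in>cube n. f (apply_restr \<rho> y) = c)"

definition restr_literal :: "nat \<Rightarrow> ((nat \<Rightarrow> bool) \<Rightarrow> bool) \<Rightarrow> (nat \<Rightarrow> bool option) \<Rightarrow> bool" where
  "restr_literal n f \<rho> \<longleftrightarrow> (\<exists>i\<in>free_vars n \<rho>.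
      (\<forall>y\<in>cube n. f (apply_restr \<rho> y) = y i) \<or> (\<forall>y\<in>cube n. f (apply_restr \<rho> y) = (\<not> y i)))"

end

theory Submission imports Defs "HOL-Analysis.Convex" begin

lemma finite_cube: "finite (cube n)"
proof -
  have "cube n \<subseteq> {x. \<forall>i. (i \<in> {..<n} \<longrightarrow> x i \<in> UNIV) \<and> (i \<notin> {..<n} \<longrightarrow> x i = False)}"
    by (auto simp: cube_def)
  moreover have "finite {x::nat\<Rightarrow>bool. \<forall>i. (i \<in> {..<n} \<longrightarrow> x i \<in> UNIV) \<and> (i \<notin> {..<n} \<longrightarrow> x i = False)}"
    by (rule finite_set_of_finite_funs) auto
  ultimately show ?thesis by (rule finite_subset)
qed

lemma finite_restrictions: "finite (restrictions n)"
proof -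
  have "restrictions n \<subseteq> {x. \<forall>i. (i \<in> {..<n} \<longrightarrow> x i \<in> UNIV) \<and> (i \<notin> {..<n} \<longrightarrow> x i = None)}"
    by (auto simp: restrictions_def)
  moreover have "finite {x::nat\<Rightarrow>bool option. \<forall>i. (i \<in> {..<n} \<longrightarrow> x i \<in> UNIV) \<and> (i \<notin> {..<n} \<longrightarrow> x i = None)}"
    by (rule finite_set_of_finite_funs) auto
  ultimately show ?thesis by (rule finite_subset)
qed

lemma sens_le_s0: "x \<in> cube n \<Longrightarrow> f x = False \<Longrightarrow> sens_at n f x \<le> s0 n f"
  unfolding s0_def by (rule Max_ge) (auto simp: finite_cube)

lemma sens_le_s1: "x \<in> cube n \<Longrightarrow> f x = True \<Longrightarrow> sens_at n f x \<le> s1 n f"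
  unfolding s1_def by (rule Max_ge) (auto simp: finite_cube)

lemma hamming_sym: "hamming n x y = hamming n y x"
  unfolding hamming_def by metis

lemma nbr_card:
  assumes x: "x \<in> cube n" and Y: "Y \<subseteq> cube n" "\<And>y. y \<in> Y \<Longrightarrow> f y \<noteq> f x"
  shows "card {y\<in>Y. hamming n x y = 1} \<le> sens_at n f x"
proof -
  have "{y\<in>Y. hamming n x y = 1} \<subseteq> flip x ` {i. i < n \<and> f (flip x i) \<noteq> f x}"
  proof
    fix y assume yy: "y \<in> {y\<in>Y. hamming n x y = 1}"
    then obtain j where j: "{i. i < n \<and> x i \<noteq> y i} = {j}"
      unfolding hamming_def using card_1_singletonE by auto
    have yc: "y \<in> cube n" using yy Y by auto
    have "y = flip x j"
    proof
      fix i show "y i = flip x j i"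
      proof (cases "i = j")
        case True then show ?thesis using j by (auto simp: flip_def)
      next
        case False
        show ?thesis
        proof (cases "i < n")
          case True then show ?thesis using j False by (auto simp: flip_def)
        next
          case F2: False then show ?thesis using x yc False by (auto simp: flip_def cube_def)
        qed
      qed
    qed
    moreover have "j < n" using j by auto
    ultimately show "y \<in> flip x ` {i. i < n \<and> f (flip x i) \<noteq> f x}" using yy Y by auto
  qed
  then have "card {y\<in>Y. hamming n x y = 1} \<le> card (flip x ` {i. i < n \<and> f (flip x i) \<noteq> f x})"
    by (rule card_mono[rotated]) auto
  also have "\<dots> \<le> sens_at n f x" unfolding sens_at_def by (rule card_image_le) auto
  finally show ?thesis .
qed

lemma card_real_sum: "finite B \<Longrightarrow> real (card {y\<in>B. P y}) = (\<Sum>y\<in>B. if P y then 1 else 0)"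
  by (simp add: sum.If_cases Collect_conj_eq Int_commute)


definition QQ :: "nat \<Rightarrow> (nat\<Rightarrow>bool) \<Rightarrow> (nat\<Rightarrow>bool) \<Rightarrow> real" where
  "QQ n x y = (if hamming n x y = 1 then 1 else 0)"

lemma degA:
  assumes A: "A \<subseteq> {x \<in> cube n. f x = False}" and B: "B \<subseteq> {x \<in> cube n. f x = True}" and x: "x \<in> A"
  shows "(\<Sum>y\<in>B. QQ n x y) \<le> real (s0 n f)"
proof -
  have fB: "finite B" by (rule finite_subset[OF B]) (simp add: finite_cube)
  have "(\<Sum>y\<in>B. QQ n x y) = real (card {y\<in>B. hamming n x y = 1})"
    using card_real_sum[OF fB] by (simp add: QQ_def)
  also have "\<dots> \<le> real (sens_at n f x)"
    using nbr_card[of x n B f] A B x by auto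
  also have "\<dots> \<le> real (s0 n f)" using sens_le_s0[of x n f] A x by auto
  finally show ?thesis .
qed

lemma degB:
  assumes A: "A \<subseteq> {x \<in> cube n. f x = False}" and B: "B \<subseteq> {x \<in> cube n. f x = True}" and y: "y \<in> B"
  shows "(\<Sum>x\<in>A. QQ n x y) \<le> real (s1 n f)"
proof -
  have fA: "finite A" by (rule finite_subset[OF A]) (simp add: finite_cube)
  have "(\<Sum>x\<in>A. QQ n x y) = real (card {x\<in>A. hamming n y x = 1})"
    using card_real_sum[OF fA] by (simp add: QQ_def hamming_sym)
  also have "\<dots> \<le> real (sens_at n f y)"
    using nbr_card[of y n A f] A B y by auto
  also have "\<dots> \<le> real (s1 n f)" using sens_le_s1[of y n f] B y by auto
  finally show ?thesis .
qed

lemma khrap: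
  assumes A: "A \<subseteq> {x \<in> cube n. f x = False}" and B: "B \<subseteq> {x \<in> cube n. f x = True}"
    and ne: "A \<noteq> {}" "B \<noteq> {}"
  shows "real (card {(x, y). x \<in> A \<and> y \<in> B \<and> hamming n x y = 1}) ^ 2
            / (real (card A) * real (card B)) \<le> real (s0 n f * s1 n f)"
proof -
  have fA: "finite A" by (rule finite_subset[OF A]) (simp add: finite_cube)
  have fB: "finite B" by (rule finite_subset[OF B]) (simp add: finite_cube)
  have eq: "{(x, y). x \<in> A \<and> y \<in> B \<and> hamming n x y = 1} = Sigma A (\<lambda>x. {y\<in>B. hamming n x y = 1})"
    by auto
  have "real (card {(x, y). x \<in> A \<and> y \<in> B \<and> hamming n x y = 1}) = (\<Sum>x\<in>A. real (card {y\<in>B. hamming n x y = 1}))"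
    unfolding eq using fA fB by (simp add: card_SigmaI)
  also have "\<dots> = (\<Sum>x\<in>A. \<Sum>y\<in>B. QQ n x y)"
    using card_real_sum[OF fB] by (simp add: QQ_def)
  finally have C: "real (card {(x, y). x \<in> A \<and> y \<in> B \<and> hamming n x y = 1}) = (\<Sum>x\<in>A. \<Sum>y\<in>B. QQ n x y)" .
  define c where "c = (\<Sum>x\<in>A. \<Sum>y\<in>B. QQ n x y)"
  have c0: "0 \<le> c" unfolding c_def by (intro sum_nonneg) (auto simp: QQ_def)
  have c1: "c \<le> real (card A) * real (s0 n f)"
    unfolding c_def using sum_mono[of A "\<lambda>x. \<Sum>y\<in>B. QQ n x y" "\<lambda>_. real (s0 n f)"] degA[OF A B] by auto
  have c2: "c \<le> real (card B) * real (s1 n f)"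
    unfolding c_def sum.swap[where A=A] using sum_mono[of B "\<lambda>y. \<Sum>x\<in>A. QQ n x y" "\<lambda>_. real (s1 n f)"] degB[OF A B] by auto
  have "c ^ 2 \<le> (real (card A) * real (s0 n f)) * (real (card B) * real (s1 n f))"
    unfolding power2_eq_square by (rule mult_mono[OF c1 c2]) (use c0 in auto)
  moreover have "0 < real (card A) * real (card B)" using fA fB ne by (simp add: card_gt_0_iff)
  ultimately show ?thesis unfolding C c_def[symmetric]
    by (simp add: divide_le_eq algebra_simps)
qed

lemma kout_pt:
  assumes A: "A \<subseteq> {x \<in> cube n. f x = False}" and B: "B \<subseteq> {x \<in> cube n. f x = True}"
    and u: "(\<Sum>y\<in>B. (u y)\<^sup>2) = 1"
  shows "(\<Sum>x\<in>A. (\<Sum>y\<in>B. QQ n x y * u y)\<^sup>2) \<le> real (s0 n f * s1 n f)"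
proof -
  have fA: "finite A" by (rule finite_subset[OF A]) (simp add: finite_cube)
  have fB: "finite B" by (rule finite_subset[OF B]) (simp add: finite_cube)
  have Q2: "QQ n x y ^ 2 = QQ n x y" for x y by (simp add: QQ_def)
  have "(\<Sum>x\<in>A. (\<Sum>y\<in>B. QQ n x y * u y)\<^sup>2) \<le> (\<Sum>x\<in>A. (\<Sum>y\<in>B. QQ n x y) * (\<Sum>y\<in>B. QQ n x y * (u y)\<^sup>2))"
  proof (rule sum_mono)
    fix x assume "x \<in> A"
    have "(\<Sum>y\<in>B. QQ n x y * u y)\<^sup>2 = (\<Sum>y\<in>B. QQ n x y * (QQ n x y * u y))\<^sup>2"
      by (intro arg_cong[where f="\<lambda>t. t^2"] sum.cong) (auto simp: QQ_def)
    also have "\<dots> \<le> (\<Sum>y\<in>B. (QQ n x y)\<^sup>2) * (\<Sum>y\<in>B. (QQ n x y * u y)\<^sup>2)"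
      by (rule Cauchy_Schwarz_ineq_sum)
    also have "\<dots> = (\<Sum>y\<in>B. QQ n x y) * (\<Sum>y\<in>B. QQ n x y * (u y)\<^sup>2)"
      by (simp add: Q2 power_mult_distrib)
    finally show "(\<Sum>y\<in>B. QQ n x y * u y)\<^sup>2 \<le> (\<Sum>y\<in>B. QQ n x y) * (\<Sum>y\<in>B. QQ n x y * (u y)\<^sup>2)" .
  qed
  also have "\<dots> \<le> (\<Sum>x\<in>A. real (s0 n f) * (\<Sum>y\<in>B. QQ n x y * (u y)\<^sup>2))"
  proof (rule sum_mono)
    fix x assume x: "x \<in> A"
    have "0 \<le> (\<Sum>y\<in>B. QQ n x y * (u y)\<^sup>2)" by (intro sum_nonneg) (auto simp: QQ_def)
    then show "(\<Sum>y\<in>B. QQ n x y) * (\<Sum>y\<in>B. QQ n x y * (u y)\<^sup>2) \<le> real (s0 n f) * (\<Sum>y\<in>B. QQ n x y * (u y)\<^sup>2)"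
      using degA[OF A B x] by (rule mult_right_mono[rotated])
  qed
  also have "\<dots> = real (s0 n f) * (\<Sum>y\<in>B. (u y)\<^sup>2 * (\<Sum>x\<in>A. QQ n x y))"
    unfolding sum_distrib_left sum_distrib_right sum.swap[where A=A] by (simp add: mult.commute mult.left_commute)
  also have "\<dots> \<le> real (s0 n f) * (\<Sum>y\<in>B. (u y)\<^sup>2 * real (s1 n f))"
    by (intro mult_left_mono sum_mono) (auto intro: degB[OF A B])
  also have "\<dots> = real (s0 n f * s1 n f)"
    by (simp add: sum_distrib_right[symmetric] u)
  finally show ?thesis .
qed


lemma spec_bound:
  assumes A: "A \<subseteq> {x \<in> cube n. f x = False}" and B: "B \<subseteq> {x \<in> cube n. f x = True}"
    and ne: "B \<noteq> {}"
  shows "(spec_norm A B (\<lambda>x y. if hamming n x y = 1 then 1 else 0)) ^ 2 \<le> real (s0 n f * s1 n f)"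
proof -
  have fB: "finite B" by (rule finite_subset[OF B]) (simp add: finite_cube)
  have QQe: "(\<lambda>x y. if hamming n x y = 1 then 1 else 0) = QQ n" by (auto simp: QQ_def fun_eq_iff)
  define S where "S = {sqrt (\<Sum>x\<in>A. (\<Sum>y\<in>B. QQ n x y * u y)\<^sup>2) | u. (\<Sum>y\<in>B. (u y)\<^sup>2) = 1}"
  have sn: "spec_norm A B (\<lambda>x y. if hamming n x y = 1 then 1 else 0) = Sup S"
    unfolding spec_norm_def QQe S_def ..
  have ub: "s \<le> sqrt (real (s0 n f * s1 n f))" if "s \<in> S" for s
  proof -
    from that obtain u where hu: "(\<Sum>y\<in>B. (u y)\<^sup>2) = 1" and ss: "s = sqrt (\<Sum>x\<in>A. (\<Sum>y\<in>B. QQ n x y * u y)\<^sup>2)"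
      unfolding S_def by blast
    show ?thesis using real_sqrt_le_mono[OF kout_pt[OF A B hu]] ss by simp
  qed
  obtain y0 where y0: "y0 \<in> B" using ne by auto
  have "(\<Sum>y\<in>B. ((\<lambda>y. if y = y0 then 1 else 0 :: real) y)\<^sup>2) = 1"
  proof -
    have "(\<Sum>y\<in>B. ((\<lambda>y. if y = y0 then 1 else 0 :: real) y)\<^sup>2) = (\<Sum>y\<in>B. if y = y0 then 1 else 0)"
      by (rule sum.cong) auto
    then show ?thesis using fB y0 by simp
  qed
  note u1 = this
  have "sqrt (\<Sum>x\<in>A. (\<Sum>y\<in>B. QQ n x y * ((\<lambda>y. if y = y0 then 1 else 0 :: real) y))\<^sup>2) \<in> S" unfolding S_def
    apply (rule CollectI)
    apply (rule exI[where x="\<lambda>y. if y = y0 then 1 else 0 :: real"])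
    apply (rule conjI[OF refl])
    by (rule u1)
  then have Sne: "S \<noteq> {}" by blast
  have le: "Sup S \<le> sqrt (real (s0 n f * s1 n f))" by (rule cSup_least[OF Sne ub])
  obtain s where s: "s \<in> S" using Sne by auto
  have "0 \<le> s" using s unfolding S_def by (auto intro!: sum_nonneg)
  also have "s \<le> Sup S" by (rule cSup_upper[OF s], rule bdd_aboveI[of _ "sqrt (real (s0 n f * s1 n f))"], rule ub)
  finally have "0 \<le> Sup S" .
  then have "(Sup S)^2 \<le> (sqrt (real (s0 n f * s1 n f)))^2" by (rule power_mono[OF le])
  then show ?thesis unfolding sn by simp
qed


lemma free_sub: "free_vars n \<rho> \<subseteq> {..<n}" by (auto simp: free_vars_def)

lemma w_fix:
  assumes p: "0 < p" and i: "i \<in> free_vars n \<rho>"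
  shows "Rp_weight n p (\<rho>(i := Some b)) = Rp_weight n p \<rho> * ((1 - p) / (2 * p))"
proof -
  have fv: "free_vars n (\<rho>(i := Some b)) = free_vars n \<rho> - {i}"
    by (auto simp: free_vars_def)
  have fin: "finite (free_vars n \<rho>)" using free_sub finite_subset by blast
  define k where "k = card (free_vars n \<rho>)"
  have k1: "k \<ge> 1" using i fin unfolding k_def by (metis One_nat_def Suc_leI card_gt_0_iff empty_iff)
  have kn: "k \<le> n" unfolding k_def using card_mono[OF _ free_sub] by (metis card_lessThan finite_lessThan)
  have ck: "card (free_vars n (\<rho>(i := Some b))) = k - 1" unfolding fv k_def using fin i by simp
  obtain m where m: "k = Suc m" using k1 by (cases k) auto
  have nk: "n - m = Suc (n - k)" using kn m by simp
  show ?thesis unfolding Rp_weight_def ck k_def[symmetric] using p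
    by (simp add: m nk field_simps)
qed

lemma apply_fix: "\<rho> i = None \<Longrightarrow> apply_restr (\<rho>(i := Some b)) y = apply_restr \<rho> (y(i := b))"
  by (auto simp: apply_restr_def fun_eq_iff split: option.splits)

lemma apply_cube: "\<rho> \<in> restrictions n \<Longrightarrow> y \<in> cube n \<Longrightarrow> apply_restr \<rho> y \<in> cube n"
  by (auto simp: apply_restr_def cube_def restrictions_def)

lemma upd_cube: "y \<in> cube n \<Longrightarrow> i < n \<Longrightarrow> y(i := b) \<in> cube n"
  by (auto simp: cube_def)

definition lit :: "nat \<Rightarrow> ((nat \<Rightarrow> bool) \<Rightarrow> bool) \<Rightarrow> (nat \<Rightarrow> bool option) \<Rightarrow> nat \<times> bool" where
  "lit n f \<rho> = (SOME ic. fst ic \<in> free_vars n \<rho> \<and> (\<forall>y\<in>cube n. f (apply_restr \<rho> y) = (y (fst ic) = snd ic)))"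

lemma lit_spec:
  assumes "restr_literal n f \<rho>"
  shows "fst (lit n f \<rho>) \<in> free_vars n \<rho> \<and> (\<forall>y\<in>cube n. f (apply_restr \<rho> y) = (y (fst (lit n f \<rho>)) = snd (lit n f \<rho>)))"
proof -
  have "\<exists>ic. fst ic \<in> free_vars n \<rho> \<and> (\<forall>y\<in>cube n. f (apply_restr \<rho> y) = (y (fst ic) = snd ic))"
  proof -
    from assms obtain i where i: "i \<in> free_vars n \<rho>" and
      h: "(\<forall>y\<in>cube n. f (apply_restr \<rho> y) = y i) \<or> (\<forall>y\<in>cube n. f (apply_restr \<rho> y) = (\<not> y i))"
      unfolding restr_literal_def by blast
    from h show ?thesis
    proof
      assume "\<forall>y\<in>cube n. f (apply_restr \<rho> y) = y i"
      then show ?thesis using i by (intro exI[of _ "(i, True)"]) simp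
    next
      assume "\<forall>y\<in>cube n. f (apply_restr \<rho> y) = (\<not> y i)"
      then show ?thesis using i by (intro exI[of _ "(i, False)"]) simp
    qed
  qed
  then show ?thesis unfolding lit_def by (rule someI_ex)
qed

definition gfix :: "nat \<Rightarrow> ((nat \<Rightarrow> bool) \<Rightarrow> bool) \<Rightarrow> bool \<Rightarrow> (nat \<Rightarrow> bool option) \<Rightarrow> (nat \<Rightarrow> bool option)" where
  "gfix n f d \<rho> = \<rho>(fst (lit n f \<rho>) := Some (snd (lit n f \<rho>) = d))"

lemma sens_le_d: "x \<in> cube n \<Longrightarrow> f x = d \<Longrightarrow> sens_at n f x \<le> (if d then s1 n f else s0 n f)"
  using sens_le_s0[of x n f] sens_le_s1[of x n f] by (cases d) auto

lemma hastad_half: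
  assumes p: "0 < p" "p < 1" and D: "is_filter n \<Delta>"
  shows "(\<Sum>\<rho>\<in>{\<rho>\<in>\<Delta>. restr_literal n f \<rho>}. Rp_weight n p (gfix n f d \<rho>))
     \<le> real (if d then s1 n f else s0 n f) * (\<Sum>\<rho>\<in>{\<rho>\<in>\<Delta>. restr_const n f d \<rho>}. Rp_weight n p \<rho>)"
proof -
  let ?C = "{\<rho>\<in>\<Delta>. restr_literal n f \<rho>}"
  let ?D = "{\<rho>\<in>\<Delta>. restr_const n f d \<rho>}"
  let ?w = "Rp_weight n p"
  let ?g = "gfix n f d"
  let ?sd = "real (if d then s1 n f else s0 n f)"
  have Dsub: "\<Delta> \<subseteq> restrictions n" using D unfolding is_filter_def by blast
  have finD: "finite \<Delta>" using finite_subset[OF Dsub finite_restrictions] .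
  have finC: "finite ?C" using finD by simp
  have wnn: "0 \<le> ?w \<rho>" for \<rho> unfolding Rp_weight_def using p by simp
  have y0: "(\<lambda>_. False) \<in> cube n" by (simp add: cube_def)
  have gD: "?g \<rho> \<in> ?D" if r: "\<rho> \<in> ?C" for \<rho>
  proof -
    have ls: "fst (lit n f \<rho>) \<in> free_vars n \<rho>" "\<forall>y\<in>cube n. f (apply_restr \<rho> y) = (y (fst (lit n f \<rho>)) = snd (lit n f \<rho>))"
      using lit_spec[of n f \<rho>] r by auto
    have "?g \<rho> \<in> \<Delta>" using D r ls(1) unfolding is_filter_def gfix_def by blast
    moreover have "restr_const n f d (?g \<rho>)"
      unfolding restr_const_def
    proof
      fix y assume y: "y \<in> cube n"
      have "\<rho> (fst (lit n f \<rho>)) = None" "fst (lit n f \<rho>) < n" using ls(1) by (auto simp: free_vars_def)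
      then show "f (apply_restr (?g \<rho>) y) = d"
        unfolding gfix_def using apply_fix ls(2) upd_cube[OF y] by auto
    qed
    ultimately show ?thesis by simp
  qed
  have fib: "card {\<rho>\<in>?C. ?g \<rho> = \<sigma>} \<le> ?sd" if s: "\<sigma> \<in> ?D" for \<sigma>
  proof -
    define x where "x = apply_restr \<sigma> (\<lambda>_. False)"
    have xc: "x \<in> cube n" unfolding x_def using apply_cube y0 s Dsub by blast
    have fx: "f x = d" using s y0 unfolding x_def restr_const_def by auto
    have "inj_on (\<lambda>\<rho>. fst (lit n f \<rho>)) {\<rho>\<in>?C. ?g \<rho> = \<sigma>}"
    proof (rule inj_onI)
      fix r1 r2 assume r1: "r1 \<in> {\<rho>\<in>?C. ?g \<rho> = \<sigma>}" and r2: "r2 \<in> {\<rho>\<in>?C. ?g \<rho> = \<sigma>}"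
        and eq: "fst (lit n f r1) = fst (lit n f r2)"
      have "r1 (fst (lit n f r1)) = None" using lit_spec[of n f r1] r1 by (auto simp: free_vars_def)
      then have "r1 = \<sigma>(fst (lit n f r1) := None)" using r1 unfolding gfix_def by auto
      moreover have "r2 (fst (lit n f r2)) = None" using lit_spec[of n f r2] r2 by (auto simp: free_vars_def)
      then have "r2 = \<sigma>(fst (lit n f r2) := None)" using r2 unfolding gfix_def by auto
      ultimately show "r1 = r2" using eq by simp
    qed
    then have "card {\<rho>\<in>?C. ?g \<rho> = \<sigma>} = card ((\<lambda>\<rho>. fst (lit n f \<rho>)) ` {\<rho>\<in>?C. ?g \<rho> = \<sigma>})"
      by (simp add: card_image)
    also have "\<dots> \<le> card {i. i < n \<and> f (flip x i) \<noteq> f x}"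
    proof (rule card_mono)
      show "finite {i. i < n \<and> f (flip x i) \<noteq> f x}" by simp
      show "(\<lambda>\<rho>. fst (lit n f \<rho>)) ` {\<rho>\<in>?C. ?g \<rho> = \<sigma>} \<subseteq> {i. i < n \<and> f (flip x i) \<noteq> f x}"
      proof
        fix i assume "i \<in> (\<lambda>\<rho>. fst (lit n f \<rho>)) ` {\<rho>\<in>?C. ?g \<rho> = \<sigma>}"
        then obtain \<rho> where r: "\<rho> \<in> ?C" "?g \<rho> = \<sigma>" and ii: "i = fst (lit n f \<rho>)" by blast
        define c where "c = snd (lit n f \<rho>)"
        have ls: "i \<in> free_vars n \<rho>" "\<forall>y\<in>cube n. f (apply_restr \<rho> y) = (y i = c)"
          using lit_spec[of n f \<rho>] r unfolding ii c_def by auto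
        have ri: "\<rho> i = None" "i < n" using ls(1) by (auto simp: free_vars_def)
        have sg: "\<sigma> = \<rho>(i := Some (c = d))" using r(2) unfolding gfix_def ii c_def by simp
        have xe: "x = apply_restr \<rho> ((\<lambda>_. False)(i := (c = d)))"
          unfolding x_def sg using apply_fix[of \<rho> i] ri(1) by simp
        have "flip x i = apply_restr \<rho> ((\<lambda>_. False)(i := \<not>(c = d)))"
          unfolding xe flip_def using ri(1) by (auto simp: apply_restr_def fun_eq_iff split: option.splits)
        then have "f (flip x i) = (\<not> d)"
          using ls(2) upd_cube[OF y0 ri(2)] by auto
        then show "i \<in> {i. i < n \<and> f (flip x i) \<noteq> f x}" using fx ri(2) by auto
      qed
    qed
    also have "\<dots> \<le> (if d then s1 n f else s0 n f)"
      using sens_le_d[of x n f d] xc fx unfolding sens_at_def by simp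
    finally show ?thesis by simp
  qed
  have "(\<Sum>\<rho>\<in>?C. ?w (?g \<rho>)) = (\<Sum>\<sigma>\<in>?g ` ?C. \<Sum>\<rho>\<in>{\<rho>\<in>?C. ?g \<rho> = \<sigma>}. ?w (?g \<rho>))"
    by (rule sum.image_gen[OF finC])
  also have "\<dots> = (\<Sum>\<sigma>\<in>?g ` ?C. ?w \<sigma> * real (card {\<rho>\<in>?C. ?g \<rho> = \<sigma>}))"
    by (rule sum.cong) auto
  also have "\<dots> \<le> (\<Sum>\<sigma>\<in>?g ` ?C. ?w \<sigma> * ?sd)"
    by (rule sum_mono, rule mult_left_mono[OF _ wnn], rule fib) (use gD in blast)
  also have "\<dots> \<le> (\<Sum>\<sigma>\<in>?D. ?w \<sigma> * ?sd)"
    by (rule sum_mono2) (use finD gD wnn in auto)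
  also have "\<dots> = ?sd * (\<Sum>\<sigma>\<in>?D. ?w \<sigma>)" by (simp add: sum_distrib_left mult.commute)
  finally show ?thesis .
qed


lemma hastad:
  assumes p: "0 < p" "p < 1" and D: "is_filter n \<Delta>"
    and pa: "cond_prob n p (restr_const n f False) \<Delta> > 0"
    and pb: "cond_prob n p (restr_const n f True) \<Delta> > 0"
  shows "cond_prob n p (restr_literal n f) \<Delta> ^ 2
            / (cond_prob n p (restr_const n f False) \<Delta> * cond_prob n p (restr_const n f True) \<Delta>)
            * ((1 - p) / (2 * p)) ^ 2
          \<le> real (s0 n f * s1 n f)"
proof -
  let ?w = "Rp_weight n p"
  define W where "W = (\<Sum>\<rho>\<in>\<Delta>. ?w \<rho>)"
  define Wa where "Wa = (\<Sum>\<rho>\<in>{\<rho>\<in>\<Delta>. restr_const n f False \<rho>}. ?w \<rho>)"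
  define Wb where "Wb = (\<Sum>\<rho>\<in>{\<rho>\<in>\<Delta>. restr_const n f True \<rho>}. ?w \<rho>)"
  define Wc where "Wc = (\<Sum>\<rho>\<in>{\<rho>\<in>\<Delta>. restr_literal n f \<rho>}. ?w \<rho>)"
  define q where "q = (1 - p) / (2 * p)"
  have Xd: "Wc * q = (\<Sum>\<rho>\<in>{\<rho>\<in>\<Delta>. restr_literal n f \<rho>}. ?w (gfix n f d \<rho>))" for d
    unfolding Wc_def sum_distrib_right
  proof (rule sum.cong[OF refl])
    fix \<rho> assume "\<rho> \<in> {\<rho>\<in>\<Delta>. restr_literal n f \<rho>}"
    then have "fst (lit n f \<rho>) \<in> free_vars n \<rho>" using lit_spec[of n f \<rho>] by auto
    then show "?w \<rho> * q = ?w (gfix n f d \<rho>)" unfolding gfix_def q_def using w_fix[OF p(1)] by simp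
  qed
  have X0: "Wc * q \<le> real (s0 n f) * Wa" using hastad_half[OF p D, of f False] Xd[of False] unfolding Wa_def by simp
  have X1: "Wc * q \<le> real (s1 n f) * Wb" using hastad_half[OF p D, of f True] Xd[of True] unfolding Wb_def by simp
  have wnn: "0 \<le> ?w \<rho>" for \<rho> unfolding Rp_weight_def using p by simp
  have Wc0: "0 \<le> Wc * q" unfolding Wc_def q_def using p by (intro mult_nonneg_nonneg sum_nonneg wnn) auto
  have sq: "(Wc * q)^2 \<le> (real (s0 n f) * Wa) * (real (s1 n f) * Wb)"
    unfolding power2_eq_square by (rule mult_mono[OF X0 X1]) (use Wc0 X0 in linarith)+
  have ca: "cond_prob n p (restr_const n f False) \<Delta> = Wa / W" unfolding cond_prob_def Wa_def W_def ..
  have cb: "cond_prob n p (restr_const n f True) \<Delta> = Wb / W" unfolding cond_prob_def Wb_def W_def ..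
  have cc: "cond_prob n p (restr_literal n f) \<Delta> = Wc / W" unfolding cond_prob_def Wc_def W_def ..
  have W0: "W \<noteq> 0" using pa ca by auto
  have ab: "Wa * Wb > 0"
  proof -
    have "0 < (Wa / W) * (Wb / W)" using pa pb ca cb by (simp only:) (rule mult_pos_pos)
    then have "0 < (Wa * Wb) / (W * W)" by simp
    then show ?thesis using W0 by (simp add: zero_less_divide_iff)
  qed
  have "(Wc / W)^2 / ((Wa / W) * (Wb / W)) * q^2 = (Wc * q)^2 / (Wa * Wb)"
    using W0 by (simp add: field_simps power2_eq_square)
  also have "\<dots> \<le> real (s0 n f * s1 n f)"
    using sq ab by (simp add: divide_le_eq algebra_simps)
  finally show ?thesis unfolding ca cb cc q_def .
qed

theorem mainTheorem11:
  fixes n :: nat and f :: "(nat \<Rightarrow> bool) \<Rightarrow> bool"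
  shows "real (s0 n f * s1 n f) \<le> real (sens n f) ^ 2
    \<and> (\<forall>A B. A \<noteq> {} \<longrightarrow> B \<noteq> {} \<longrightarrow>
          A \<subseteq> {x \<in> cube n. f x = False} \<longrightarrow> B \<subseteq> {x \<in> cube n. f x = True} \<longrightarrow>
          real (card {(x, y). x \<in> A \<and> y \<in> B \<and> hamming n x y = 1}) ^ 2
            / (real (card A) * real (card B)) \<le> real (s0 n f * s1 n f))
    \<and> (\<forall>A B. A \<noteq> {} \<longrightarrow> B \<noteq> {} \<longrightarrow>
          A \<subseteq> {x \<in> cube n. f x = False} \<longrightarrow> B \<subseteq> {x \<in> cube n. f x = True} \<longrightarrow>
          (spec_norm A B (\<lambda>x y. if hamming n x y = 1 then 1 else 0)) ^ 2
            \<le> real (s0 n f * s1 n f))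
    \<and> (\<forall>p \<Delta>. 0 < p \<longrightarrow> p < 1 \<longrightarrow> is_filter n \<Delta> \<longrightarrow>
          cond_prob n p (restr_const n f False) \<Delta> > 0 \<longrightarrow>
          cond_prob n p (restr_const n f True) \<Delta> > 0 \<longrightarrow>
          cond_prob n p (restr_literal n f) \<Delta> ^ 2
            / (cond_prob n p (restr_const n f False) \<Delta> * cond_prob n p (restr_const n f True) \<Delta>)
            * ((1 - p) / (2 * p)) ^ 2
          \<le> real (s0 n f * s1 n f))"
proof -
  have "s0 n f * s1 n f \<le> sens n f * sens n f" unfolding sens_def by (intro mult_mono) auto
  then have "real (s0 n f * s1 n f) \<le> real (sens n f) ^ 2"
    unfolding power2_eq_square of_nat_mult[symmetric] by (rule of_nat_mono)
  moreover have "\<forall>A B. A \<noteq> {} \<longrightarrow> B \<noteq> {} \<longrightarrow>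
          A \<subseteq> {x \<in> cube n. f x = False} \<longrightarrow> B \<subseteq> {x \<in> cube n. f x = True} \<longrightarrow>
          real (card {(x, y). x \<in> A \<and> y \<in> B \<and> hamming n x y = 1}) ^ 2
            / (real (card A) * real (card B)) \<le> real (s0 n f * s1 n f)"
    using khrap by blast
  moreover have "\<forall>A B. A \<noteq> {} \<longrightarrow> B \<noteq> {} \<longrightarrow>
          A \<subseteq> {x \<in> cube n. f x = False} \<longrightarrow> B \<subseteq> {x \<in> cube n. f x = True} \<longrightarrow>
          (spec_norm A B (\<lambda>x y. if hamming n x y = 1 then 1 else 0)) ^ 2
            \<le> real (s0 n f * s1 n f)"
    using spec_bound by blast
  moreover have "\<forall>p \<Delta>. 0 < p \<longrightarrow> p < 1 \<longrightarrow> is_filter n \<Delta> \<longrightarrow>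
          cond_prob n p (restr_const n f False) \<Delta> > 0 \<longrightarrow>
          cond_prob n p (restr_const n f True) \<Delta> > 0 \<longrightarrow>
          cond_prob n p (restr_literal n f) \<Delta> ^ 2
            / (cond_prob n p (restr_const n f False) \<Delta> * cond_prob n p (restr_const n f True) \<Delta>)
            * ((1 - p) / (2 * p)) ^ 2
          \<le> real (s0 n f * s1 n f)"
    using hastad by blast
  ultimately show ?thesis by (intro conjI)
qed

end
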